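(* Let $P,W$ be finite point sets in the plane such that no two distinct points of $P\cup W$ have equal $x$-coordinate or equal $y$-coordinate, and let $p,q\in P$ be distinct. If there is $w\in W$ with $x(w)$ strictly between $x(p)$ and $x(q)$, or with $y(w)$ strictly between $y(p)$ and $y(q)$, then $pq$ is an edge of $\mathrm{SG}^+(P,W)$.
   Context: For finite point sets $P$ (vertices) and $W$ (witnesses) in $\mathbb{R}^2$ (which may share points), the square graph $\mathrm{SG}^+(P,W)$ is the graph with vertex set $P$ in which distinct $x,y\in P$ are adjacent if and only if there is an axis-aligned square with $x$ and $y$ on its boundary whose interior contains at least one point of $W$. $x(\cdot)$ and $y(\cdot)$ denote coordinates. *)

theory Defs
  imports Main "HOL-Analysis.Analysis"
begin

type_synonym point = "real \<times> real"

definition closed_sq :: "real \<Rightarrow> real \<Rightarrow> real \<Rightarrow> point set" where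
  "closed_sq a b s = {z. a \<le> fst z \<and> fst z \<le> a + s \<and> b \<le> snd z \<and> snd z \<le> b + s}"

definition open_sq :: "real \<Rightarrow> real \<Rightarrow> real \<Rightarrow> point set" where
  "open_sq a b s = {z. a < fst z \<and> fst z < a + s \<and> b < snd z \<and> snd z < b + s}"

definition bd_sq :: "real \<Rightarrow> real \<Rightarrow> real \<Rightarrow> point set" where
  "bd_sq a b s = closed_sq a b s - open_sq a b s"

definition SG_edge :: "point set \<Rightarrow> point set \<Rightarrow> point \<Rightarrow> point \<Rightarrow> bool" where
  "SG_edge P W x y \<longleftrightarrow> x \<in> P \<and> y \<in> P \<and> x \<noteq> y \<and>
     (\<exists>a b s. s > 0 \<and> x \<in> bd_sq a b s \<and> y \<in> bd_sq a b s \<and> (\<exists>w\<in>W. w \<in> open_sq a b s))"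

definition strictly_between :: "real \<Rightarrow> real \<Rightarrow> real \<Rightarrow> bool" where
  "strictly_between t u v \<longleftrightarrow> min u v < t \<and> t < max u v"

end

theory Submission
  imports Defs
begin

lemma xcase:
  fixes x1 y1 x2 y2 xw yw :: real
  assumes "x1 < xw" "xw < x2" "yw \<noteq> y1"
  shows "\<exists>a b s. s > 0 \<and> (x1,y1) \<in> bd_sq a b s \<and> (x2,y2) \<in> bd_sq a b s \<and> (xw,yw) \<in> open_sq a b s"
proof -
  define s where "s = \<bar>x2-x1\<bar> + \<bar>yw-y1\<bar> + \<bar>y2-y1\<bar> + \<bar>yw - y2\<bar> + 1"
  have s0: "s > 0" unfolding s_def by simp
  consider "y1 \<le> y2" "yw > y1" | "y1 \<le> y2" "yw < y2" | "y1 \<ge> y2" "yw < y1" | "y1 \<ge> y2" "yw > y2"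
    using assms by linarith
  then show ?thesis
  proof cases
    case 1
    show ?thesis
      by (rule exI[of _ "x2 - s"], rule exI[of _ y1], rule exI[of _ s])
         (use 1 assms s0 in \<open>auto simp: bd_sq_def closed_sq_def open_sq_def s_def\<close>)
  next
    case 2
    show ?thesis
      by (rule exI[of _ x1], rule exI[of _ "y2 - s"], rule exI[of _ s])
         (use 2 assms s0 in \<open>auto simp: bd_sq_def closed_sq_def open_sq_def s_def\<close>)
  next
    case 3
    show ?thesis
      by (rule exI[of _ "x2 - s"], rule exI[of _ "y1 - s"], rule exI[of _ s])
         (use 3 assms s0 in \<open>auto simp: bd_sq_def closed_sq_def open_sq_def s_def\<close>)
  next
    case 4
    show ?thesis
      by (rule exI[of _ x1], rule exI[of _ y2], rule exI[of _ s])
         (use 4 assms s0 in \<open>auto simp: bd_sq_def closed_sq_def open_sq_def s_def\<close>)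
  qed
qed

lemma xcase2:
  fixes x1 y1 x2 y2 xw yw :: real
  assumes "strictly_between xw x1 x2" "yw \<noteq> y1" "yw \<noteq> y2"
  shows "\<exists>a b s. s > 0 \<and> (x1,y1) \<in> bd_sq a b s \<and> (x2,y2) \<in> bd_sq a b s \<and> (xw,yw) \<in> open_sq a b s"
proof (cases "x1 < x2")
  case True
  then show ?thesis using xcase[of x1 xw x2 yw y1 y2] assms
    by (auto simp: strictly_between_def min_def max_def split: if_splits)
next
  case False
  then obtain a b s where "s > 0 \<and> (x2,y2) \<in> bd_sq a b s \<and> (x1,y1) \<in> bd_sq a b s \<and> (xw,yw) \<in> open_sq a b s"
    using xcase[of x2 xw x1 yw y2 y1] assms
    by (auto simp: strictly_between_def min_def max_def split: if_splits)
  then show ?thesis by blast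
qed

lemma swap_bd: "(x,y) \<in> bd_sq a b s \<longleftrightarrow> (y,x) \<in> bd_sq b a s"
  by (auto simp: bd_sq_def closed_sq_def open_sq_def)

lemma swap_open: "(x,y) \<in> open_sq a b s \<longleftrightarrow> (y,x) \<in> open_sq b a s"
  by (auto simp: open_sq_def)

theorem mainTheorem8:
  fixes P W :: "point set" and p q :: point
  assumes "finite P" and "finite W"
    and "\<forall>u\<in>P \<union> W. \<forall>v\<in>P \<union> W. u \<noteq> v \<longrightarrow> fst u \<noteq> fst v \<and> snd u \<noteq> snd v"
    and "p \<in> P" and "q \<in> P" and "p \<noteq> q"
    and "\<exists>w\<in>W. strictly_between (fst w) (fst p) (fst q) \<or> strictly_between (snd w) (snd p) (snd q)"
  shows "SG_edge P W p q"
proof -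
  obtain w where w: "w \<in> W" and sb: "strictly_between (fst w) (fst p) (fst q) \<or> strictly_between (snd w) (snd p) (snd q)"
    using assms(7) by blast
  have wp: "w \<noteq> p" and wq: "w \<noteq> q" using sb by (auto simp: strictly_between_def)
  have d: "fst w \<noteq> fst p" "snd w \<noteq> snd p" "fst w \<noteq> fst q" "snd w \<noteq> snd q"
    using assms(3) w assms(4,5) wp wq by blast+
  obtain x1 y1 x2 y2 xw yw where pe: "p = (x1,y1)" and qe: "q = (x2,y2)" and we: "w = (xw,yw)"
    by (metis prod.exhaust)
  have "\<exists>a b s. s > 0 \<and> p \<in> bd_sq a b s \<and> q \<in> bd_sq a b s \<and> w \<in> open_sq a b s"
    using sb
  proof
    assume "strictly_between (fst w) (fst p) (fst q)"
    then show ?thesis using xcase2[of xw x1 x2 yw y1 y2] d pe qe we by auto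
  next
    assume "strictly_between (snd w) (snd p) (snd q)"
    then obtain a b s where "s > 0 \<and> (y1,x1) \<in> bd_sq a b s \<and> (y2,x2) \<in> bd_sq a b s \<and> (yw,xw) \<in> open_sq a b s"
      using xcase2[of yw y1 y2 xw x1 x2] d pe qe we by auto
    then show ?thesis using pe qe we swap_bd swap_open by metis
  qed
  then show ?thesis unfolding SG_edge_def using assms(4,5,6) w by blast
qed

end
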